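(* Let $n\ge 1$ and $N\ge 1$ be integers and $0<p<1$. In the random model described in the context, let $\mathsf{Y_{cycle}}$ denote the multiset of right vertices (reads) of the bipartite graph $\mathcal{G}$ that lie on at least one cycle of $\mathcal{G}$. Then $$P\big(|\mathsf{Y_{cycle}}|>1\big) > 1-\frac{\mathcal{U}_{\mathsf{cycle}}}{N2^n(1-\mathcal{U}_{\mathsf{cycle}})},\qquad\text{where } \mathcal{U}_{\mathsf{cycle}}=2^{-N\left((1+p^2)^n-1\right)}.$$
   Context: Model: Let $M=2^n$ and let the address set be $C=\{0,1\}^n=\{\mathbf{x}_1,\dots,\mathbf{x}_M\}$. Let $L$ be a positive integer (the data length). Data parts $\mathbf{d}_1,\dots,\mathbf{d}_M$ are drawn independently and uniformly at random from $\{0,1\}^L$; the $i$-th strand is $(\mathbf{x}_i,\mathbf{d}_i)$. Each strand is transmitted $N$ times through the binary erasure channel $\mathsf{BEC}(p)$: in each transmission every symbol is independently replaced by the erasure symbol $*$ with probability $p$ and kept otherwise, independently across transmissions and strands. The receiver obtains the unordered multiset $\mathcal{Y}$ of the $MN$ reads $(\mathbf{y},\mathbf{d}')\in\{0,1,*\}^n\times\{0,1,*\}^L$. An address $\mathbf{x}\in C$ is compatible with a read $(\mathbf{y},\mathbf{d}')$ if $\mathbf{x}$ and $\mathbf{y}$ coincide at every position where $\mathbf{y}$ is not erased. The bipartite graph $\mathcal{G}$ has left vertex set $C$, right vertex set $\mathcal{Y}$ (reads counted with multiplicity), and an edge between $\mathbf{x}$ and $(\mathbf{y},\mathbf{d}')$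 iff $\mathbf{x}$ is compatible with $(\mathbf{y},\mathbf{d}')$. *)

theory Defs
  imports "HOL-Probability.Probability"
begin

definition addrs :: "nat \<Rightarrow> bool list set" where
  "addrs n = {xs. length xs = n}"

text \<open>Reads are indexed by (strand address x, transmission number j), j < N;
  this realises the multiset of MN reads with multiplicity.\<close>
definition reads :: "nat \<Rightarrow> nat \<Rightarrow> (bool list \<times> nat) set" where
  "reads n N = addrs n \<times> {..<N}"

text \<open>An erasure pattern E: E (x, j, k) = True iff the k-th address symbol of the
  j-th transmission of strand x was erased.\<close>
type_synonym erasures = "bool list \<times> nat \<times> nat \<Rightarrow> bool"

text \<open>Received address symbol k of read r = (x, j): None = erasure symbol.\<close>
definition read_addr :: "erasures \<Rightarrow> bool list \<times> nat \<Rightarrow> nat \<Rightarrow> bool option" where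
  "read_addr E r k = (if E (fst r, snd r, k) then None else Some (fst r ! k))"

definition compatible :: "nat \<Rightarrow> erasures \<Rightarrow> bool list \<Rightarrow> bool list \<times> nat \<Rightarrow> bool" where
  "compatible n E x r = (\<forall>k<n. read_addr E r k \<noteq> None \<longrightarrow> read_addr E r k = Some (x ! k))"

definition gadj :: "nat \<Rightarrow> nat \<Rightarrow> erasures \<Rightarrow>
    (bool list + bool list \<times> nat) \<Rightarrow> (bool list + bool list \<times> nat) \<Rightarrow> bool" where
  "gadj n N E u v = (case (u, v) of
      (Inl x, Inr r) \<Rightarrow> x \<in> addrs n \<and> r \<in> reads n N \<and> compatible n E x r
    | (Inr r, Inl x) \<Rightarrow> x \<in> addrs n \<and> r \<in> reads n N \<and> compatible n E x r
    | _ \<Rightarrow> False)"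

definition is_cycle :: "('v \<Rightarrow> 'v \<Rightarrow> bool) \<Rightarrow> 'v list \<Rightarrow> bool" where
  "is_cycle adj vs = (3 \<le> length vs \<and> distinct vs \<and>
     (\<forall>i<length vs. adj (vs ! i) (vs ! ((i + 1) mod length vs))))"

definition Ycycle :: "nat \<Rightarrow> nat \<Rightarrow> erasures \<Rightarrow> (bool list \<times> nat) set" where
  "Ycycle n N E = {r \<in> reads n N. \<exists>vs. is_cycle (gadj n N E) vs \<and> Inr r \<in> set vs}"

definition erasure_pmf :: "nat \<Rightarrow> nat \<Rightarrow> real \<Rightarrow> erasures pmf" where
  "erasure_pmf n N p = Pi_pmf (addrs n \<times> {..<N} \<times> {..<n}) False (\<lambda>_. bernoulli_pmf p)"

definition U_cycle :: "nat \<Rightarrow> nat \<Rightarrow> real \<Rightarrow> real" where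
  "U_cycle n N p = 2 powr (- (real N * ((1 + p\<^sup>2) ^ n - 1)))"

end

theory Submission
  imports Defs "HOL-Analysis.Harmonic_Numbers"
begin

lemma exp_taylor_lower:
  fixes x :: real assumes "0 \<le> x"
  shows "(\<Sum>k<n. x^k / fact k) \<le> exp x"
proof -
  have "(\<lambda>k. x^k /\<^sub>R fact k) sums exp x" by (rule exp_converges)
  hence s: "summable (\<lambda>k. x^k / fact k)" and e: "exp x = (\<Sum>k. x^k / fact k)"
    by (simp_all add: sums_iff scaleR_conv_of_real divide_inverse mult.commute)
  show ?thesis unfolding e
    by (rule sum_le_suminf[OF s]) (use assms in auto)
qed

lemma exp_taylor9:
  fixes x :: real assumes "0 \<le> x"
  shows "1 + x + x^2/2 + x^3/6 + x^4/24 + x^5/120 + x^6/720 + x^7/5040 + x^8/40320 \<le> exp x"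
  using exp_taylor_lower[OF assms, of 9]
  by (simp add: lessThan_nat_numeral fact_numeral eval_nat_numeral algebra_simps)

lemma e_gt: "(2718/1000::real) < exp 1"
  using exp_taylor9[of 1] by simp

lemma ln2_le: "ln (2::real) \<le> 25/36" by (rule ln2_le_25_over_36)

lemma exp_minus_one_le: fixes z :: real assumes "0 \<le> z" shows "exp z - 1 \<le> z * exp z"
proof -
  have "1 - z \<le> exp (-z)" using exp_ge_add_one_self[of "-z"] by simp
  hence "(1 - z) * exp z \<le> exp (-z) * exp z" by (simp add: mult_right_mono)
  thus ?thesis by (simp add: exp_minus field_simps)
qed

lemma yexp_le: fixes y c :: real assumes "0 \<le> y" "0 < c"
  shows "y * exp (- (c*y)) \<le> exp (-1) / c"
proof -
  have "c*y \<le> exp (c*y - 1)" using exp_ge_add_one_self[of "c*y - 1"] by simp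
  hence "c*y * exp (-(c*y)) \<le> exp (c*y - 1) * exp (-(c*y))" by (simp add: mult_right_mono)
  also have "\<dots> = exp (-1)" by (simp flip: exp_add)
  finally show ?thesis using assms by (simp add: field_simps)
qed

lemma one_plus_exp_le: fixes u c :: real assumes "0 \<le> u" "0 < c"
  shows "(1+u) * exp (- (c*u)) \<le> exp (c - 1) / c"
proof -
  have "(1+u) * exp (- (c*(1+u))) \<le> exp (-1) / c" using yexp_le[of "1+u" c] assms by simp
  hence "(1+u) * exp (- (c*(1+u))) * exp c \<le> exp (-1) / c * exp c" by (rule mult_right_mono) simp_all
  thus ?thesis by (simp add: algebra_simps flip: exp_add exp_diff)
qed


lemma one_minus_le_exp2: fixes t :: real assumes "0 \<le> t"
  shows "1 - t \<le> exp (- t - t^2/2)"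
proof -
  let ?f = "\<lambda>t::real. exp (- t - t^2/2) - (1 - t)"
  have "?f 0 \<le> ?f t"
  proof (rule DERIV_nonneg_imp_nondecreasing[OF assms])
    fix x :: real assume x: "0 \<le> x" "x \<le> t"
    have d: "DERIV ?f x :> exp (- x - x^2/2) * (-1 - x) + 1"
      by (auto intro!: derivative_eq_intros simp: power2_eq_square)
    have "1 + x \<le> exp x" by simp
    also have "\<dots> \<le> exp (x + x^2/2)" using x by simp
    finally have "(1+x) * exp (- x - x^2/2) \<le> exp (x + x^2/2) * exp (- x - x^2/2)"
      by (rule mult_right_mono) simp
    also have "\<dots> = 1" by (simp flip: exp_add)
    finally have "exp (- x - x^2/2) * (-1 - x) + 1 \<ge> 0" by (simp add: algebra_simps)
    with d show "\<exists>y. DERIV ?f x :> y \<and> y \<ge> 0" by blast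
  qed
  thus ?thesis by simp
qed

lemma ln_pade: fixes w :: real assumes "0 \<le> w"
  shows "1 + w \<le> exp (w - 3*w^2/(6+4*w))"
proof -
  let ?f = "\<lambda>w::real. (w - 3*w^2/(6+4*w)) - ln (1+w)"
  have "?f 0 \<le> ?f w"
  proof (rule DERIV_nonneg_imp_nondecreasing[OF assms])
    fix x :: real assume x: "0 \<le> x" "x \<le> w"
    have d: "DERIV ?f x :> (1 - ((3*(2*x))*(6+4*x) - 3*x^2*4)/((6+4*x)*(6+4*x))) - 1/(1+x)"
      using x(1) apply (intro derivative_eq_intros) apply (auto simp: power2_eq_square) done
    have p: "(6+4*x)*(6+4*x) > 0" "1+x > 0" using x by auto
    have a: "1 - ((3*(2*x))*(6+4*x) - 3*x^2*4)/((6+4*x)*(6+4*x)) = (36+12*x+4*x^2)/((6+4*x)*(6+4*x))"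
      using p by (simp add: field_simps power2_eq_square) 
    have b: "1/(1+x) \<le> (36+12*x+4*x^2)/((6+4*x)*(6+4*x))"
      using p apply (simp add: divide_simps)
      using x(1) by (simp add: algebra_simps power2_eq_square)
    have "(1 - ((3*(2*x))*(6+4*x) - 3*x^2*4)/((6+4*x)*(6+4*x))) - 1/(1+x) \<ge> 0"
      using a b by linarith
    with d show "\<exists>y. DERIV ?f x :> y \<and> y \<ge> 0" by blast
  qed
  hence "ln (1+w) \<le> w - 3*w^2/(6+4*w)" by simp
  hence "exp (ln (1+w)) \<le> exp (w - 3*w^2/(6+4*w))" by simp
  thus ?thesis using assms by simp
qed


lemma polyB1_0: fixes p :: real assumes "(0::real) \<le> p" "p \<le> (1/2::real)"
  shows "0 \<le> 9/10 - 8*p^2*(1-p)^3*(1+3*p)"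
proof -
  have h1: "0 \<le> p - (0::real)" "0 \<le> (1/2::real) - p" using assms by auto
  have h2: "0 \<le> (9/10::real) * (p - (0::real))^0 * ((1/2::real) - p)^6 + (27/5::real) * (p - (0::real))^1 * ((1/2::real) - p)^5 + (23/2::real) * (p - (0::real))^2 * ((1/2::real) - p)^4 + (10::real) * (p - (0::real))^3 * ((1/2::real) - p)^3 + (9/2::real) * (p - (0::real))^4 * ((1/2::real) - p)^2 + (7/5::real) * (p - (0::real))^5 * ((1/2::real) - p)^1 + (11/40::real) * (p - (0::real))^6 * ((1/2::real) - p)^0" using h1 by (intro add_nonneg_nonneg mult_nonneg_nonneg zero_le_power) simp_all
  have h3: "(9/10 - 8*p^2*(1-p)^3*(1+3*p)) * (1/2::real)^6 = (9/10::real) * (p - (0::real))^0 * ((1/2::real) - p)^6 + (27/5::real) * (p - (0::real))^1 * ((1/2::real) - p)^5 + (23/2::real) * (p - (0::real))^2 * ((1/2::real) - p)^4 + (10::real) * (p - (0::real))^3 * ((1/2::real) - p)^3 + (9/2::real) * (p - (0::real))^4 * ((1/2::real) - p)^2 + (7/5::real) * (p - (0::real))^5 * ((1/2::real) - p)^1 + (11/40::real) * (p - (0::real))^6 * ((1/2::real) - p)^0" by algebra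
  have "0 \<le> (9/10 - 8*p^2*(1-p)^3*(1+3*p)) * (1/2::real)^6" using h2 h3 by simp
  thus ?thesis by (simp add: zero_le_mult_iff)
qed

lemma polyB1_1: fixes p :: real assumes "(1/2::real) \<le> p" "p \<le> (1::real)"
  shows "0 \<le> 9/10 - 8*p^2*(1-p)^3*(1+3*p)"
proof -
  have h1: "0 \<le> p - (1/2::real)" "0 \<le> (1::real) - p" using assms by auto
  have h2: "0 \<le> (11/40::real) * (p - (1/2::real))^0 * ((1::real) - p)^6 + (19/10::real) * (p - (1/2::real))^1 * ((1::real) - p)^5 + (7::real) * (p - (1/2::real))^2 * ((1::real) - p)^4 + (14::real) * (p - (1/2::real))^3 * ((1::real) - p)^3 + (27/2::real) * (p - (1/2::real))^4 * ((1::real) - p)^2 + (27/5::real) * (p - (1/2::real))^5 * ((1::real) - p)^1 + (9/10::real) * (p - (1/2::real))^6 * ((1::real) - p)^0" using h1 by (intro add_nonneg_nonneg mult_nonneg_nonneg zero_le_power) simp_all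
  have h3: "(9/10 - 8*p^2*(1-p)^3*(1+3*p)) * (1/2::real)^6 = (11/40::real) * (p - (1/2::real))^0 * ((1::real) - p)^6 + (19/10::real) * (p - (1/2::real))^1 * ((1::real) - p)^5 + (7::real) * (p - (1/2::real))^2 * ((1::real) - p)^4 + (14::real) * (p - (1/2::real))^3 * ((1::real) - p)^3 + (27/2::real) * (p - (1/2::real))^4 * ((1::real) - p)^2 + (27/5::real) * (p - (1/2::real))^5 * ((1::real) - p)^1 + (9/10::real) * (p - (1/2::real))^6 * ((1::real) - p)^0" by algebra
  have "0 \<le> (9/10 - 8*p^2*(1-p)^3*(1+3*p)) * (1/2::real)^6" using h2 h3 by simp
  thus ?thesis by (simp add: zero_le_mult_iff)
qed

lemma polyB1: fixes p :: real assumes "(0::real) \<le> p" "p \<le> (1::real)"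
  shows "0 \<le> 9/10 - 8*p^2*(1-p)^3*(1+3*p)"
proof -
  have "(0::real) \<le> p \<Longrightarrow> p \<le> (1/2::real) \<Longrightarrow> 0 \<le> 9/10 - 8*p^2*(1-p)^3*(1+3*p)" by (rule polyB1_0)
  note polyB1_0_r = this
  have "(1/2::real) \<le> p \<Longrightarrow> p \<le> (1::real) \<Longrightarrow> 0 \<le> 9/10 - 8*p^2*(1-p)^3*(1+3*p)" by (rule polyB1_1)
  note polyB1_1_r = this
  show ?thesis using assms polyB1_0_r polyB1_1_r by linarith
qed

lemma polyB2_0: fixes p :: real assumes "(7/10::real) \<le> p" "p \<le> (1::real)"
  shows "0 \<le> 9/10 - 4*(1-p)^3*(1+3*p)*(4*p^2-1)"
proof -
  have h1: "0 \<le> p - (7/10::real)" "0 \<le> (1::real) - p" using assms by auto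
  have h2: "0 \<le> (18081/31250::real) * (p - (7/10::real))^0 * ((1::real) - p)^6 + (189/50::real) * (p - (7/10::real))^1 * ((1::real) - p)^5 + (27351/2500::real) * (p - (7/10::real))^2 * ((1::real) - p)^4 + (2088/125::real) * (p - (7/10::real))^3 * ((1::real) - p)^3 + (27/2::real) * (p - (7/10::real))^4 * ((1::real) - p)^2 + (27/5::real) * (p - (7/10::real))^5 * ((1::real) - p)^1 + (9/10::real) * (p - (7/10::real))^6 * ((1::real) - p)^0" using h1 by (intro add_nonneg_nonneg mult_nonneg_nonneg zero_le_power) simp_all
  have h3: "(9/10 - 4*(1-p)^3*(1+3*p)*(4*p^2-1)) * (3/10::real)^6 = (18081/31250::real) * (p - (7/10::real))^0 * ((1::real) - p)^6 + (189/50::real) * (p - (7/10::real))^1 * ((1::real) - p)^5 + (27351/2500::real) * (p - (7/10::real))^2 * ((1::real) - p)^4 + (2088/125::real) * (p - (7/10::real))^3 * ((1::real) - p)^3 + (27/2::real) * (p - (7/10::real))^4 * ((1::real) - p)^2 + (27/5::real) * (p - (7/10::real))^5 * ((1::real) - p)^1 + (9/10::real) * (p - (7/10::real))^6 * ((1::real) - p)^0" by algebra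
  have "0 \<le> (9/10 - 4*(1-p)^3*(1+3*p)*(4*p^2-1)) * (3/10::real)^6" using h2 h3 by simp
  thus ?thesis by (simp add: zero_le_mult_iff)
qed

lemma polyB2: fixes p :: real assumes "(7/10::real) \<le> p" "p \<le> (1::real)"
  shows "0 \<le> 9/10 - 4*(1-p)^3*(1+3*p)*(4*p^2-1)"
  using polyB2_0[OF assms] .

lemma polyD1_0: fixes x :: real assumes "(0::real) \<le> x" "x \<le> (1/2::real)"
  shows "0 \<le> 9/10 - 4*(1-x)^4*(2*x+x^2)"
proof -
  have h1: "0 \<le> x - (0::real)" "0 \<le> (1/2::real) - x" using assms by auto
  have h2: "0 \<le> (9/10::real) * (x - (0::real))^0 * ((1/2::real) - x)^6 + (7/5::real) * (x - (0::real))^1 * ((1/2::real) - x)^5 + (1/2::real) * (x - (0::real))^2 * ((1/2::real) - x)^4 + (2::real) * (x - (0::real))^3 * ((1/2::real) - x)^3 + (4::real) * (x - (0::real))^4 * ((1/2::real) - x)^2 + (53/20::real) * (x - (0::real))^5 * ((1/2::real) - x)^1 + (47/80::real) * (x - (0::real))^6 * ((1/2::real) - x)^0" using h1 by (intro add_nonneg_nonneg mult_nonneg_nonneg zero_le_power) simp_all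
  have h3: "(9/10 - 4*(1-x)^4*(2*x+x^2)) * (1/2::real)^6 = (9/10::real) * (x - (0::real))^0 * ((1/2::real) - x)^6 + (7/5::real) * (x - (0::real))^1 * ((1/2::real) - x)^5 + (1/2::real) * (x - (0::real))^2 * ((1/2::real) - x)^4 + (2::real) * (x - (0::real))^3 * ((1/2::real) - x)^3 + (4::real) * (x - (0::real))^4 * ((1/2::real) - x)^2 + (53/20::real) * (x - (0::real))^5 * ((1/2::real) - x)^1 + (47/80::real) * (x - (0::real))^6 * ((1/2::real) - x)^0" by algebra
  have "0 \<le> (9/10 - 4*(1-x)^4*(2*x+x^2)) * (1/2::real)^6" using h2 h3 by simp
  thus ?thesis by (simp add: zero_le_mult_iff)
qed

lemma polyD1_1: fixes x :: real assumes "(1/2::real) \<le> x" "x \<le> (1::real)"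
  shows "0 \<le> 9/10 - 4*(1-x)^4*(2*x+x^2)"
proof -
  have h1: "0 \<le> x - (1/2::real)" "0 \<le> (1::real) - x" using assms by auto
  have h2: "0 \<le> (47/80::real) * (x - (1/2::real))^0 * ((1::real) - x)^6 + (22/5::real) * (x - (1/2::real))^1 * ((1::real) - x)^5 + (51/4::real) * (x - (1/2::real))^2 * ((1::real) - x)^4 + (18::real) * (x - (1/2::real))^3 * ((1::real) - x)^3 + (27/2::real) * (x - (1/2::real))^4 * ((1::real) - x)^2 + (27/5::real) * (x - (1/2::real))^5 * ((1::real) - x)^1 + (9/10::real) * (x - (1/2::real))^6 * ((1::real) - x)^0" using h1 by (intro add_nonneg_nonneg mult_nonneg_nonneg zero_le_power) simp_all
  have h3: "(9/10 - 4*(1-x)^4*(2*x+x^2)) * (1/2::real)^6 = (47/80::real) * (x - (1/2::real))^0 * ((1::real) - x)^6 + (22/5::real) * (x - (1/2::real))^1 * ((1::real) - x)^5 + (51/4::real) * (x - (1/2::real))^2 * ((1::real) - x)^4 + (18::real) * (x - (1/2::real))^3 * ((1::real) - x)^3 + (27/2::real) * (x - (1/2::real))^4 * ((1::real) - x)^2 + (27/5::real) * (x - (1/2::real))^5 * ((1::real) - x)^1 + (9/10::real) * (x - (1/2::real))^6 * ((1::real) - x)^0" by algebra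
  have "0 \<le> (9/10 - 4*(1-x)^4*(2*x+x^2)) * (1/2::real)^6" using h2 h3 by simp
  thus ?thesis by (simp add: zero_le_mult_iff)
qed

lemma polyD1: fixes x :: real assumes "(0::real) \<le> x" "x \<le> (1::real)"
  shows "0 \<le> 9/10 - 4*(1-x)^4*(2*x+x^2)"
proof -
  have "(0::real) \<le> x \<Longrightarrow> x \<le> (1/2::real) \<Longrightarrow> 0 \<le> 9/10 - 4*(1-x)^4*(2*x+x^2)" by (rule polyD1_0)
  note polyD1_0_r = this
  have "(1/2::real) \<le> x \<Longrightarrow> x \<le> (1::real) \<Longrightarrow> 0 \<le> 9/10 - 4*(1-x)^4*(2*x+x^2)" by (rule polyD1_1)
  note polyD1_1_r = this
  show ?thesis using assms polyD1_0_r polyD1_1_r by linarith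
qed

lemma polyD2_0: fixes x :: real assumes "(2/5::real) \<le> x" "x \<le> (1::real)"
  shows "0 \<le> 9/10 - 4*(1-x)^4*(6*x+3*x^2-2)"
proof -
  have h1: "0 \<le> x - (2/5::real)" "0 \<le> (1::real) - x" using assms by auto
  have h2: "0 \<le> (13869/31250::real) * (x - (2/5::real))^0 * ((1::real) - x)^6 + (5859/3125::real) * (x - (2/5::real))^1 * ((1::real) - x)^5 + (12339/1250::real) * (x - (2/5::real))^2 * ((1::real) - x)^4 + (18::real) * (x - (2/5::real))^3 * ((1::real) - x)^3 + (27/2::real) * (x - (2/5::real))^4 * ((1::real) - x)^2 + (27/5::real) * (x - (2/5::real))^5 * ((1::real) - x)^1 + (9/10::real) * (x - (2/5::real))^6 * ((1::real) - x)^0" using h1 by (intro add_nonneg_nonneg mult_nonneg_nonneg zero_le_power) simp_all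
  have h3: "(9/10 - 4*(1-x)^4*(6*x+3*x^2-2)) * (3/5::real)^6 = (13869/31250::real) * (x - (2/5::real))^0 * ((1::real) - x)^6 + (5859/3125::real) * (x - (2/5::real))^1 * ((1::real) - x)^5 + (12339/1250::real) * (x - (2/5::real))^2 * ((1::real) - x)^4 + (18::real) * (x - (2/5::real))^3 * ((1::real) - x)^3 + (27/2::real) * (x - (2/5::real))^4 * ((1::real) - x)^2 + (27/5::real) * (x - (2/5::real))^5 * ((1::real) - x)^1 + (9/10::real) * (x - (2/5::real))^6 * ((1::real) - x)^0" by algebra
  have "0 \<le> (9/10 - 4*(1-x)^4*(6*x+3*x^2-2)) * (3/5::real)^6" using h2 h3 by simp
  thus ?thesis by (simp add: zero_le_mult_iff)
qed

lemma polyD2: fixes x :: real assumes "(2/5::real) \<le> x" "x \<le> (1::real)"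
  shows "0 \<le> 9/10 - 4*(1-x)^4*(6*x+3*x^2-2)"
  using polyD2_0[OF assms] .

lemma polyE: fixes x :: real assumes "0 \<le> x" "x \<le> 1"
  shows "0 \<le> 5/6 + x/2 - 25/144*(1+x)^2 - 3/5"
proof -
  have h3: "720*(5/6 + x/2 - 25/144*(1+x)^2 - 3/5) = 43*(1-x)^2 + 196*x*(1-x) + 28*x^2"
    by (simp add: power2_eq_square algebra_simps)
  have "0 \<le> 43*(1-x)^2 + 196*x*(1-x) + 28*x^2" using assms by simp
  thus ?thesis using h3 by simp
qed

lemma two_powr_chord: fixes v L :: real assumes "0 \<le> v" "v \<le> L" "0 < L"
  shows "2 powr v \<le> 1 + (2 powr L - 1) * v / L"
proof -
  define t where "t = v / L"
  have t: "0 \<le> t" "t \<le> 1" using assms by (auto simp: t_def)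
  have "exp ((1 - t) *\<^sub>R 0 + t *\<^sub>R (L * ln 2)) \<le> (1 - t) * exp 0 + t * exp (L * ln 2)"
    by (rule convex_onD[OF exp_convex]) (use t in auto)
  hence c: "exp (t * (L * ln 2)) \<le> (1 - t) * exp 0 + t * exp (L * ln 2)" by simp
  have e: "t * (L * ln 2) = v * ln 2" using assms by (simp add: t_def)
  have "exp (v * ln 2) \<le> (1 - t) * exp 0 + t * exp (L * ln 2)" using c unfolding e .
  hence "exp (v * ln 2) \<le> 1 + t * (exp (L * ln 2) - 1)" by (simp add: algebra_simps)
  thus ?thesis by (simp add: powr_def t_def mult.commute)
qed

lemma two_powr_le1: fixes v :: real assumes "0 \<le> v" "v \<le> 1" shows "2 powr v \<le> 1 + v"
  using two_powr_chord[of v 1] assms by simp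

lemma two_powr_le2: fixes v :: real assumes "0 \<le> v" "v \<le> 2" shows "2 powr v \<le> 1 + 3 * v / 2"
  using two_powr_chord[of v 2] assms by simp

lemma Dbound: fixes x :: real assumes "0 \<le> x"
  shows "(1+x)^n - 1 \<le> n*x*(1+x)^(n-1)"
proof (induction n)
  case 0 thus ?case by simp
next
  case (Suc k)
  have a: "(1+x)^(Suc k) - 1 = (1+x)*((1+x)^k - 1) + x" by (simp add: algebra_simps)
  have "(1+x)*((1+x)^k - 1) \<le> (1+x)*(k*x*(1+x)^(k-1))"
    using Suc.IH assms by (intro mult_left_mono) auto
  also have "\<dots> = k*x*(1+x)^k"
    by (cases k) (simp_all add: algebra_simps)
  finally have "(1+x)^(Suc k) - 1 \<le> k*x*(1+x)^k + x" using a by linarith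
  also have "x \<le> x*(1+x)^k" using assms by (simp add: mult_le_cancel_left1 one_le_power)
  hence "k*x*(1+x)^k + x \<le> Suc k * x * (1+x)^(Suc k - 1)" by (simp add: algebra_simps)
  finally show ?case .
qed

lemma two_powr_m1: fixes t :: real assumes "0 \<le> t"
  shows "2 powr t - 1 \<le> ln 2 * t * exp (ln 2 * t)"
  using exp_minus_one_le[of "ln 2 * t"] assms by (simp add: powr_def mult.commute)

lemma texp_mono: fixes t T :: real assumes "0 \<le> t" "t \<le> T"
  shows "ln 2 * t * exp (ln 2 * t) \<le> ln 2 * T * exp (ln 2 * T)"
  using assms by (intro mult_mono) auto

lemma q_eq: fixes p :: real assumes "1 \<le> N"
  shows "(1-p)^(2*N) + 2*N*p*(1-p)^(2*N-1) = (1-p)^(2*N-1) * (1 + (2*N-1)*p)"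
proof -
  have "2*N = Suc (2*N-1)" using assms by simp
  hence "(1-p)^(2*N) = (1-p)*(1-p)^(2*N-1)" by (metis power_Suc)
  moreover have "real (2*N-1) = 2 * real N - 1" using assms by (simp add: of_nat_diff)
  moreover have "real (2*N) = 2 * real N" by simp
  ultimately show ?thesis by (simp add: algebra_simps)
qed

lemma q_le: fixes p m :: real assumes "0 \<le> p" "p \<le> 1" "0 \<le> m"
  shows "(1-p)^k * (1 + m*p) \<le> (1 + m*p) * exp (- (k*p) - k*p^2/2)"
proof -
  have "(1-p)^k \<le> exp (- p - p^2/2) ^ k"
    using assms one_minus_le_exp2[of p] by (intro power_mono) auto
  also have "\<dots> = exp (- (k*p) - k*p^2/2)" by (simp flip: exp_of_nat_mult add: algebra_simps)
  finally show ?thesis using assms by (simp add: mult.commute mult_left_mono)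
qed


lemma caseA: fixes p :: real assumes "0 < p" "p < 1"
  shows "(1-p^2) * 2 * (2 powr (p^2) - 1) < 1"
proof -
  have x: "0 \<le> p^2" "p^2 \<le> 1" using assms by (auto simp: power_le_one)
  have "2 powr (p^2) - 1 \<le> p^2" using two_powr_le1[OF x] by simp
  hence "(1-p^2) * 2 * (2 powr (p^2) - 1) \<le> (1-p^2) * 2 * p^2"
    using x by (intro mult_left_mono) auto
  also have "\<dots> \<le> 1/2" using sum_squares_ge_zero[of "2*p^2 - 1" 0]
    by (simp add: power2_eq_square algebra_simps)
  finally show ?thesis by simp
qed

lemma caseB: fixes p :: real assumes "0 < p" "p < 1"
  shows "((1-p)^3*(1+3*p)) * 4 * (2 powr (2*p^2) - 1) < 1"
proof -
  have q0: "0 \<le> (1-p)^3*(1+3*p) * 4" using assms by simp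
  show ?thesis
  proof (cases "2*p^2 \<le> 1")
    case True
    have "2 powr (2*p^2) - 1 \<le> 2*p^2" using two_powr_le1[of "2*p^2"] True by simp
    hence "((1-p)^3*(1+3*p)) * 4 * (2 powr (2*p^2) - 1) \<le> ((1-p)^3*(1+3*p)) * 4 * (2*p^2)"
      using q0 by (intro mult_left_mono) auto
    also have "\<dots> = 8*p^2*(1-p)^3*(1+3*p)" by (simp add: algebra_simps)
    also have "\<dots> \<le> 9/10" using polyB1[of p] assms by simp
    finally show ?thesis by simp
  next
    case False
    have p7: "7/10 \<le> p"
    proof (rule ccontr)
      assume "\<not> 7/10 \<le> p" hence "p^2 \<le> (7/10)^2" using assms by (intro power_mono) auto
      thus False using False by (simp add: power2_eq_square)
    qed
    have x1: "2*p^2 \<le> 2" using assms by (simp add: power_le_one)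
    have "2 powr (2*p^2) = 2 * 2 powr (2*p^2 - 1)" by (simp add: powr_diff)
    also have "\<dots> \<le> 2 * (1 + (2*p^2 - 1))" using two_powr_le1[of "2*p^2 - 1"] False x1 by simp
    finally have "2 powr (2*p^2) - 1 \<le> 4*p^2 - 1" by simp
    hence "((1-p)^3*(1+3*p)) * 4 * (2 powr (2*p^2) - 1) \<le> ((1-p)^3*(1+3*p)) * 4 * (4*p^2 - 1)"
      using q0 by (intro mult_left_mono) auto
    also have "\<dots> = 4*(1-p)^3*(1+3*p)*(4*p^2-1)" by (simp add: algebra_simps)
    also have "\<dots> \<le> 9/10" using polyB2[of p] assms p7 by simp
    finally show ?thesis by simp
  qed
qed

lemma caseD: fixes x :: real assumes "0 < x" "x < 1"
  shows "(1-x)^4 * 4 * (2 powr (2*x+x^2) - 1) < 1"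
proof -
  have q0: "0 \<le> (1-x)^4 * 4" using assms by simp
  have "x^2 \<le> 1" using assms by (simp add: power_le_one)
  hence u3: "2*x+x^2 \<le> 3" using assms by simp
  show ?thesis
  proof (cases "2*x+x^2 \<le> 1")
    case True
    have "2 powr (2*x+x^2) - 1 \<le> 2*x+x^2" using two_powr_le1[of "2*x+x^2"] True assms by simp
    hence "(1-x)^4 * 4 * (2 powr (2*x+x^2) - 1) \<le> (1-x)^4 * 4 * (2*x+x^2)"
      using q0 by (intro mult_left_mono) auto
    also have "\<dots> = 4*(1-x)^4*(2*x+x^2)" by (simp add: algebra_simps)
    also have "\<dots> \<le> 9/10" using polyD1[of x] assms by simp
    finally show ?thesis by simp
  next
    case False
    have x4: "2/5 \<le> x"
    proof (rule ccontr)
      assume "\<not> 2/5 \<le> x" hence "x^2 \<le> (2/5)^2" using assms by (intro power_mono) auto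
      thus False using False \<open>\<not> 2/5 \<le> x\<close> by (simp add: power2_eq_square)
    qed
    have "2 powr (2*x+x^2) = 2 * 2 powr (2*x+x^2 - 1)" by (simp add: powr_diff)
    also have "\<dots> \<le> 2 * (1 + 3 * (2*x+x^2 - 1) / 2)" proof -
      have "2 powr (2*x+x^2 - 1) \<le> 1 + 3 * (2*x+x^2 - 1) / 2"
        using False u3 by (intro two_powr_le2) auto
      thus ?thesis by (rule mult_left_mono) simp
    qed
    finally have "2 powr (2*x+x^2) - 1 \<le> 6*x+3*x^2-2" by (simp add: field_simps)
    hence "(1-x)^4 * 4 * (2 powr (2*x+x^2) - 1) \<le> (1-x)^4 * 4 * (6*x+3*x^2-2)"
      using q0 by (intro mult_left_mono) auto
    also have "\<dots> = 4*(1-x)^4*(6*x+3*x^2-2)" by (simp add: algebra_simps)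
    also have "\<dots> \<le> 9/10" using polyD2[of x] assms x4 by simp
    finally show ?thesis by simp
  qed
qed


lemma exp83: "27/2 < exp (8/3::real)"
proof -
  have "1 + 8/3 + (8/3)^2/2 + (8/3)^3/6 + (8/3)^4/24 + (8/3)^5/120 + (8/3)^6/720 + (8/3)^7/5040 + (8/3)^8/40320 \<le> exp (8/3::real)"
    by (rule exp_taylor9) simp
  moreover have "(27/2::real) < 1 + 8/3 + (8/3)^2/2 + (8/3)^3/6 + (8/3)^4/24 + (8/3)^5/120 + (8/3)^6/720 + (8/3)^7/5040 + (8/3)^8/40320"
    by (simp add: power_divide)
  ultimately show ?thesis by linarith
qed

lemma s2_bound: fixes w :: real assumes "0 \<le> w"
  shows "w^2 * (1+w) * exp (-w) \<le> 27 * exp (-8/3)"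
proof -
  have a: "w * exp (-(1/3*w)) \<le> exp (-1) / (1/3)" by (rule yexp_le) (use assms in auto)
  have b: "(1+w) * exp (-(1/3*w)) \<le> exp (1/3 - 1) / (1/3)" by (rule one_plus_exp_le) (use assms in auto)
  have "w^2 * (1+w) * exp (-w) = (w * exp (-(1/3*w)))^2 * ((1+w) * exp (-(1/3*w)))"
    by (simp add: power2_eq_square algebra_simps flip: exp_add)
  also have "\<dots> \<le> (exp (-1) / (1/3))^2 * (exp (1/3 - 1) / (1/3))"
    using a b assms by (intro mult_mono power_mono) auto
  also have "\<dots> = 27 * (exp (-1) * exp (-1) * exp (-2/3))" by (simp add: power2_eq_square)
  also have "exp (-1) * exp (-1) * exp (-2/3) = exp (-8/3::real)" by (simp flip: exp_add)
  finally show ?thesis by simp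
qed

lemma caseC: fixes p :: real and N :: nat assumes "3 \<le> N" "0 < p" "p < 1"
  shows "((1-p)^(2*N-1)*(1+(2*N-1)*p)) * (2*N) * (2 powr (N*p^2) - 1) < 1"
proof -
  define M :: real where "M = 2*N-1"
  have M: "real (2*N-1) = M" using assms by (simp add: M_def of_nat_diff)
  define w where "w = M*p"
  define Q where "Q = (1-p)^(2*N-1)*(1+(2*N-1)*p)"
  define X where "X = 2 powr (N*p^2) - 1"
  have M3: "M \<ge> 5" using assms by (simp add: M_def)
  have w0: "0 \<le> w" using M3 assms by (simp add: w_def)
  have q: "Q \<le> (1+w) * exp (- w - M*p^2/2)"
    using q_le[of p M "2*N-1"] assms M3 unfolding M by (simp add: w_def M_def Q_def)
  have q0: "0 \<le> Q" using assms by (simp add: Q_def)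
  have X0: "0 \<le> X" unfolding X_def by (simp add: ge_one_powr_ge_zero)
  have t: "X \<le> ln 2 * (N*p^2) * exp (ln 2 * (N*p^2))"
    unfolding X_def by (rule two_powr_m1) simp
  have "Q * (2*N) \<le> ((1+w) * exp (- w - M*p^2/2)) * (2*N)" by (rule mult_right_mono[OF q]) simp
  hence "Q * (2*N) * X \<le> ((1+w) * exp (- w - M*p^2/2)) * (2*N) * (ln 2 * (N*p^2) * exp (ln 2 * (N*p^2)))"
    by (rule mult_mono[OF _ t]) (use X0 w0 in auto)
  also have "\<dots> = 2 * ln 2 * (N^2*p^2) * (1+w) * exp (- w + p^2 * (ln 2 * N - M/2))"
    by (simp add: algebra_simps power2_eq_square flip: exp_add)
  also have "\<dots> \<le> 2 * ln 2 * (N^2*p^2) * (1+w) * exp (- w)"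
  proof -
    have "ln 2 * N \<le> 25/36 * N" using ln2_le by (intro mult_right_mono) auto
    also have "\<dots> \<le> M/2" using assms by (simp add: M_def)
    finally have "p^2 * (ln 2 * N - M/2) \<le> 0" by (simp add: mult_nonneg_nonpos)
    thus ?thesis using w0 by (intro mult_left_mono) auto
  qed
  also have "\<dots> \<le> 2 * (25/36) * (9/25 * w^2) * (1+w) * exp (- w)"
  proof -
    have "N \<le> 3/5 * M" using assms by (simp add: M_def)
    hence "N*p \<le> 3/5 * w" using assms by (simp add: w_def mult_right_mono)
    hence "(N*p)^2 \<le> (3/5*w)^2" using assms by (intro power_mono) auto
    hence a: "N^2*p^2 \<le> 9/25 * w^2" by (simp add: power_mult_distrib power_divide)
    have "2 * ln 2 * (N^2*p^2) \<le> 2 * (25/36) * (9/25 * w^2)"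
      by (rule mult_mono) (use a ln2_le in auto)
    thus ?thesis using w0 by (intro mult_right_mono) auto
  qed
  also have "\<dots> = 1/2 * (w^2 * (1+w) * exp (-w))" by simp
  also have "\<dots> \<le> 1/2 * (27 * exp (-8/3))" using s2_bound[OF w0] by simp
  also have "\<dots> < 1" using exp83 by (simp add: exp_minus field_simps)
  finally show ?thesis unfolding Q_def X_def .
qed


lemma one_minus_pow: fixes t :: real assumes "0 \<le> t" "t \<le> 1"
  shows "(1-t)^k \<le> exp (- (k*t) - k*t^2/2)"
  using q_le[of t 0 k] assms by simp

lemma pow2_ge_succ: "3 \<le> n \<Longrightarrow> n + 1 \<le> (2::nat)^(n-1)"
proof (induction n rule: nat_induct_at_least)
  case base thus ?case by simp
next
  case (Suc n)
  have "Suc n + 1 \<le> 2 * (n+1)" by simp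
  also have "\<dots> \<le> 2 * 2^(n-1)" using Suc.IH by simp
  also have "\<dots> = 2^(Suc n - 1)" using Suc.hyps by (cases n) auto
  finally show ?case .
qed

lemma nm1_le: assumes "3 \<le> n" shows "6 * (real n - 1) \<le> real (n*2^(n-1))"
proof -
  have "n * (n+1) \<le> n * 2^(n-1)" by (rule mult_left_mono[OF pow2_ge_succ[OF assms]]) simp
  moreover have "6 * (n - 1) \<le> n * (n+1)"
  proof -
    have "(n-2)*(n-3) \<ge> 0" by simp
    have "n*(n+1) + 6 = 6*n + (n-2)*(n-3)" using assms
      by (cases n; cases "n-1"; cases "n-2"; cases "n-3") (auto simp: algebra_simps)
    thus ?thesis using assms by linarith
  qed
  ultimately have "6 * (n - 1) \<le> n * 2^(n-1)" by linarith
  hence "real (6 * (n - 1)) \<le> real (n * 2^(n-1))" by (simp only: of_nat_le_iff)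
  thus ?thesis using assms by (simp add: of_nat_diff)
qed

lemma caseE: fixes x :: real and n :: nat assumes "3 \<le> n" "0 < x" "x < 1"
  shows "(1-x)^(n*2^(n-1)) * 2^n * (2 powr ((1+x)^n - 1) - 1) < 1"
proof -
  define A :: real where "A = real (n*2^(n-1))"
  define D where "D = (1+x)^n - 1"
  define T where "T = n*x*(1+x)^(n-1)"
  define X where "X = 2 powr D - 1"
  have D0: "0 \<le> D" using assms by (simp add: D_def one_le_power)
  have DT: "D \<le> T" unfolding D_def T_def by (rule Dbound) (use assms in simp)
  have X0: "0 \<le> X" unfolding X_def using D0 by (simp add: ge_one_powr_ge_zero)
  have XT: "X \<le> ln 2 * T * exp (ln 2 * T)"
    unfolding X_def using two_powr_m1[OF D0] texp_mono[OF D0 DT] by linarith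
  have q: "(1-x)^(n*2^(n-1)) \<le> exp (- (A*x) - A*x^2/2)"
    using one_minus_pow[of x "n*2^(n-1)"] assms by (simp add: A_def)
  have A2: "2^n * real n = 2 * A" using assms by (cases n) (auto simp: A_def algebra_simps)
  have Tn: "T = A * x * ((1+x)/2)^(n-1)"
  proof -
    have "real n * (1+x)^(n-1) = real n * 2^(n-1) * ((1+x)/2)^(n-1)"
      by (simp add: power_divide)
    thus ?thesis by (simp add: T_def A_def algebra_simps)
  qed
  have e1: "(1+x)^(n-1) \<le> exp ((n-1)*x)"
  proof -
    have "(1+x)^(n-1) \<le> exp x ^ (n-1)" using assms by (intro power_mono) auto
    thus ?thesis by (simp flip: exp_of_nat_mult add: of_nat_diff)
  qed
  have hx: "((1+x)/2)^(n-1) \<le> ((1+x)/2)^2"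
    by (rule power_decreasing) (use assms in auto)
  have nA: "real n - 1 \<le> A/6" using nm1_le[OF assms(1)] by (simp add: A_def)
  have "(1-x)^(n*2^(n-1)) * 2^n * X \<le> exp (- (A*x) - A*x^2/2) * 2^n * (ln 2 * T * exp (ln 2 * T))"
    by (rule mult_mono[OF _ XT]) (use q X0 in \<open>auto intro: mult_right_mono\<close>)
  also have "\<dots> = ln 2 * (2^n * real n) * x * (1+x)^(n-1) * exp (- (A*x) - A*x^2/2 + ln 2 * T)"
    by (simp add: T_def algebra_simps flip: exp_add)
  also have "\<dots> = 2 * ln 2 * (A * x) * (1+x)^(n-1) * exp (- (A*x) - A*x^2/2 + ln 2 * T)"
    by (simp add: A2)
  also have "\<dots> \<le> 2 * ln 2 * (A * x) * exp ((n-1)*x) * exp (- (A*x) - A*x^2/2 + ln 2 * T)"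
    using e1 assms by (intro mult_right_mono mult_left_mono) (auto simp: A_def)
  also have "\<dots> = 2 * ln 2 * (A * x) * exp (- (A*x) - A*x^2/2 + ln 2 * T + (n-1)*x)"
    by (simp add: algebra_simps flip: exp_add)
  also have "\<dots> \<le> 2 * ln 2 * (A * x) * exp (- (3/5) * (A*x))"
  proof -
    have A0: "0 \<le> A" by (simp add: A_def)
    have "ln 2 * T \<le> 25/36 * (A * x * ((1+x)/2)^2)"
      unfolding Tn using ln2_le hx A0 assms by (intro mult_mono) auto
    moreover have "(n-1)*x \<le> A/6 * x" using nA assms by (intro mult_right_mono) auto
    moreover have "0 \<le> 5/6 + x/2 - 25/144*(1+x)^2 - 3/5" using polyE[of x] assms by simp
    hence "0 \<le> (A*x) * (5/6 + x/2 - 25/144*(1+x)^2 - 3/5)" using A0 assms by simp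
    ultimately have "- (A*x) - A*x^2/2 + ln 2 * T + (n-1)*x \<le> - (3/5) * (A*x)"
      by (simp add: algebra_simps power2_eq_square power_divide)
    thus ?thesis using A0 assms ln2_le by (intro mult_left_mono) auto
  qed
  also have "\<dots> \<le> 2 * ln 2 * (exp (-1) / (3/5))"
  proof -
    have "A*x*exp(-(3/5*(A*x))) \<le> exp(-1)/(3/5)" by (rule yexp_le) (use assms in \<open>auto simp: A_def\<close>)
    hence "2 * ln 2 * (A*x*exp(-(3/5*(A*x)))) \<le> 2 * ln 2 * (exp(-1)/(3/5))" by (rule mult_left_mono) simp
    thus ?thesis by (simp add: mult.assoc)
  qed
  also have "\<dots> < 1"
  proof -
    have "2 * ln 2 * (exp (-1) / (3/5)) \<le> 2 * (25/36) * (exp (-1) / (3/5::real))"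
      using ln2_le by (intro mult_right_mono) auto
    also have "\<dots> < 1" using e_gt by (simp add: exp_minus field_simps)
    finally show ?thesis .
  qed
  finally show ?thesis unfolding X_def D_def .
qed


lemma exp613: "(800/324) * (400/361) * (600/287)^4 < exp (613/150::real)"
proof -
  have "1 + 613/150 + (613/150)^2/2 + (613/150)^3/6 + (613/150)^4/24 + (613/150)^5/120 + (613/150)^6/720 + (613/150)^7/5040 + (613/150)^8/40320 \<le> exp (613/150::real)"
    by (rule exp_taylor9) simp
  moreover have "(800/324) * (400/361) * (600/287)^4 < 1 + 613/150 + (613/150)^2/2 + (613/150)^3/6 + (613/150)^4/24 + (613/150)^5/120 + (613/150)^6/720 + (613/150)^7/5040 + (613/150::real)^8/40320"
    by (simp add: power_divide)
  ultimately show ?thesis by linarith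
qed

lemma ar_le: fixes r :: real assumes "0 < r" "r \<le> exp (-1/4)" "4 \<le> a"
  shows "a * r^a \<le> 4 * r^4"
proof -
  obtain k where k: "a = 4 + k" using assms(3) by (metis le_add_diff_inverse)
  have "r^k \<le> exp (-1/4)^k" using assms by (intro power_mono) auto
  also have "\<dots> = exp (k * (-1/4))" by (rule exp_of_nat_mult[symmetric])
  also have "\<dots> = inverse (exp (k/4))" by (simp add: exp_minus)
  also have "\<dots> \<le> inverse (1 + k/4)" by (rule le_imp_inverse_le) (auto simp del: exp_ge_add_one_self intro: exp_ge_add_one_self)
  finally have rk: "r^k \<le> 4 / (4 + k)" by (simp add: field_simps)
  have "a * r^a = (4 + k) * r^k * r^4" by (simp add: k power_add algebra_simps)
  also have "\<dots> \<le> (4 + k) * (4 / (4 + k)) * r^4"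
    using rk assms by (intro mult_right_mono mult_left_mono) auto
  also have "\<dots> = 4 * r^4"
  proof -
    have "(4 + real k) * (4 / (4 + k)) = 4" by (simp add: field_simps)
    thus ?thesis by simp
  qed
  finally show ?thesis .
qed

lemma nm1_le2: assumes "2 \<le> n" shows "4 * (real n - 1) \<le> real (n*2^(n-1))"
proof -
  have "n \<le> 2^(n-1)" using assms
  proof (induction n rule: nat_induct_at_least)
    case base thus ?case by simp
  next
    case (Suc n) thus ?case by (cases n) auto
  qed
  hence "n * n \<le> n * 2^(n-1)" by (rule mult_left_mono) simp
  moreover have "4 * (n - 1) \<le> n * n"
  proof -
    have "(real n - 2)^2 \<ge> 0" by simp
    hence "4 * (real n - 1) \<le> real n * real n" by (simp add: power2_eq_square algebra_simps)
    thus ?thesis using assms by (simp add: of_nat_diff flip: of_nat_mult of_nat_le_iff)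
  qed
  ultimately have "4 * (n - 1) \<le> n * 2^(n-1)" by linarith
  hence "real (4 * (n - 1)) \<le> real (n * 2^(n-1))" by (simp only: of_nat_le_iff)
  thus ?thesis using assms by (simp add: of_nat_diff)
qed


lemma route1: fixes A w :: real assumes "0 \<le> A" "0 \<le> w"
  shows "2 * ln 2 * (4/9 * (A * w^2)) * exp (- (211/900) * (A * w^2)) < 1"
proof -
  have y: "(A*w^2) * exp (- (211/900 * (A*w^2))) \<le> exp (-1) / (211/900)"
    by (rule yexp_le) (use assms in auto)
  have "2 * ln 2 * (4/9 * (A * w^2)) * exp (- (211/900) * (A * w^2))
        = (8/9 * ln 2) * ((A*w^2) * exp (- (211/900 * (A*w^2))))" by simp
  also have "\<dots> \<le> (8/9 * (25/36)) * (exp (-1) / (211/900))"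
    using y ln2_le assms by (intro mult_mono) auto
  also have "\<dots> < 1" using e_gt by (simp add: exp_minus field_simps)
  finally show ?thesis .
qed

lemma route2: fixes w :: real assumes "0 \<le> w"
  shows "(800/324) * (w^2 * ((1+w)^4 * exp (- (286/75) * w))) < 1"
proof -
  have a: "w * exp (- (19/20 * w)) \<le> exp (-1) / (19/20)" by (rule yexp_le) (use assms in auto)
  have b: "(1+w) * exp (- (287/600 * w)) \<le> exp (287/600 - 1) / (287/600)"
    by (rule one_plus_exp_le) (use assms in auto)
  have "w^2 * ((1+w)^4 * exp (- (286/75) * w))
      = (w * exp (- (19/20 * w)))^2 * ((1+w) * exp (- (287/600 * w)))^4"
    by (simp add: power2_eq_square power4_eq_xxxx algebra_simps flip: exp_add)
  also have "\<dots> \<le> (exp (-1) / (19/20))^2 * (exp (287/600 - 1) / (287/600))^4"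
    using a b assms by (intro mult_mono power_mono) auto
  also have "\<dots> = (400/361) * (600/287)^4 * exp (-613/150)"
    by (simp add: power2_eq_square power4_eq_xxxx field_simps flip: exp_add)
  finally have c: "w^2 * ((1+w)^4 * exp (- (286/75) * w)) \<le> (400/361) * (600/287)^4 * exp (-613/150)" .
  have "(800/324) * (w^2 * ((1+w)^4 * exp (- (286/75) * w))) \<le> (800/324) * ((400/361) * (600/287)^4 * exp (-613/150))"
    by (rule mult_left_mono[OF c]) simp
  also have "\<dots> < 1" using exp613 by (simp add: exp_minus field_simps)
  finally show ?thesis .
qed


lemma caseF: fixes p :: real and n N :: nat assumes "2 \<le> n" "2 \<le> N" "0 < p" "p < 1"
  shows "((1-p)^(2*N-1)*(1+(2*N-1)*p))^(n*2^(n-1)) * (N*2^n) * (2 powr (N*((1+p^2)^n - 1)) - 1) < 1"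
proof -
  define M :: real where "M = 2 * real N - 1"
  have M: "real (2*N-1) = M" using assms by (simp add: M_def of_nat_diff)
  define w where "w = M*p"
  define x where "x = p^2"
  define a where "a = n*2^(n-1)"
  define A :: real where "A = real a"
  define Q where "Q = (1-p)^(2*N-1)*(1+(2*N-1)*p)"
  define D where "D = (1+x)^n - 1"
  define T where "T = n*x*(1+x)^(n-1)"
  define X where "X = 2 powr (N*D) - 1"
  have M3: "M \<ge> 3" using assms by (simp add: M_def)
  have w0: "0 \<le> w" using M3 assms by (simp add: w_def)
  have x0: "0 \<le> x" "x \<le> 1" using assms by (auto simp: x_def power_le_one)
  have A0: "0 \<le> A" by (simp add: A_def)
  have a4: "4 \<le> a"
  proof -
    have "(2::nat)^1 \<le> 2^(n-1)" using assms by (intro power_increasing) auto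
    hence "2 * 2 \<le> n * 2^(n-1)" using assms by (intro mult_mono) auto
    thus ?thesis by (simp add: a_def)
  qed
  have xw2: "x \<le> w^2/9"
  proof -
    have "3*p \<le> w" using M3 assms by (simp add: w_def mult_right_mono)
    hence "(3*p)^2 \<le> w^2" using assms by (intro power_mono) auto
    thus ?thesis by (simp add: x_def power_mult_distrib)
  qed
  have xw: "x \<le> w/3"
  proof -
    have "3*p \<le> w" using M3 assms by (simp add: w_def mult_right_mono)
    moreover have "p^2 \<le> p" using assms by (simp add: power2_eq_square mult_le_cancel_right1)
    ultimately show ?thesis by (simp add: x_def)
  qed
  have N2x: "N^2 * x \<le> 4/9 * w^2"
  proof -
    have "N \<le> 2/3 * M" using assms by (simp add: M_def)
    hence "N*p \<le> 2/3 * w" using assms by (simp add: w_def mult_right_mono)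
    hence "(N*p)^2 \<le> (2/3*w)^2" using assms by (intro power_mono) auto
    thus ?thesis by (simp add: x_def power_mult_distrib power_divide)
  qed
  have Q0: "0 \<le> Q" using assms by (simp add: Q_def)
  have Qb: "Q \<le> (1+w) * exp (- w - M*x/2)"
    using q_le[of p M "2*N-1"] assms M3 unfolding M by (simp add: w_def M_def Q_def x_def)
  have Qa: "Q^a \<le> (1+w)^a * exp (- (A*w) - A*M*x/2)"
  proof -
    have "Q^a \<le> ((1+w) * exp (- w - M*x/2))^a" using Q0 Qb by (intro power_mono) auto
    also have "\<dots> = (1+w)^a * exp (A * (- w - M*x/2))"
      by (simp add: power_mult_distrib A_def exp_of_nat_mult)
    finally show ?thesis by (simp add: algebra_simps)
  qed
  have D0: "0 \<le> D" using x0 by (simp add: D_def one_le_power)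
  have DT: "D \<le> T" unfolding D_def T_def by (rule Dbound) (use x0 in simp)
  have X0: "0 \<le> X" unfolding X_def using D0 by (simp add: ge_one_powr_ge_zero)
  have XT: "X \<le> ln 2 * (N*T) * exp (ln 2 * (N*T))"
  proof -
    have "N*D \<le> N*T" using DT by (simp add: mult_left_mono)
    moreover have "0 \<le> N*D" using D0 by simp
    ultimately have "ln 2 * (N*D) * exp (ln 2 * (N*D)) \<le> ln 2 * (N*T) * exp (ln 2 * (N*T))"
      by (intro texp_mono)
    moreover have "2 powr (N*D) - 1 \<le> ln 2 * (N*D) * exp (ln 2 * (N*D))"
      using D0 by (intro two_powr_m1) simp
    ultimately show ?thesis unfolding X_def by linarith
  qed
  have A2: "2^n * real n = 2 * A" using assms by (cases n) (auto simp: A_def a_def algebra_simps)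
  have Tn: "T = A * x * ((1+x)/2)^(n-1)"
  proof -
    have "real n * (1+x)^(n-1) = real n * 2^(n-1) * ((1+x)/2)^(n-1)"
      by (simp add: power_divide)
    thus ?thesis by (simp add: T_def A_def a_def algebra_simps)
  qed
  have NT: "N*T \<le> N*A*x"
  proof -
    have "((1+x)/2)^(n-1) \<le> 1" using x0 by (intro power_le_one) auto
    hence "A * x * ((1+x)/2)^(n-1) \<le> A * x" using A0 x0 by (simp add: mult_left_le)
    hence "N * (A * x * ((1+x)/2)^(n-1)) \<le> N * (A * x)" by (rule mult_left_mono) simp
    thus ?thesis unfolding Tn by (simp add: mult.assoc)
  qed
  have e1: "(1+x)^(n-1) \<le> exp ((n-1)*x)"
  proof -
    have "(1+x)^(n-1) \<le> exp x ^ (n-1)" using x0 by (intro power_mono) auto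
    thus ?thesis by (simp flip: exp_of_nat_mult add: of_nat_diff)
  qed
  have nA: "real n - 1 \<le> A/4" using nm1_le2[OF assms(1)] by (simp add: A_def a_def)
  define H where "H = (1+w)^a * exp (- (A*w) + 7/50*A*x)"
  have H0: "0 \<le> H" using w0 by (simp add: H_def)
  have "Q^a * (N*2^n) * X \<le> ((1+w)^a * exp (- (A*w) - A*M*x/2)) * (N*2^n) * (ln 2 * (N*T) * exp (ln 2 * (N*T)))"
    by (rule mult_mono[OF _ XT]) (use Qa X0 w0 in \<open>auto intro: mult_right_mono\<close>)
  also have "\<dots> = ln 2 * N^2 * (2^n * real n) * x * (1+x)^(n-1) * (1+w)^a * exp (- (A*w) - A*M*x/2 + ln 2 * (N*T))"
    by (simp add: T_def algebra_simps power2_eq_square flip: exp_add)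
  also have "\<dots> = 2 * ln 2 * (A * N^2 * x) * (1+x)^(n-1) * ((1+w)^a * exp (- (A*w) - A*M*x/2 + ln 2 * (N*T)))"
    by (subst A2) (simp add: algebra_simps)
  also have "\<dots> \<le> 2 * ln 2 * (A * N^2 * x) * exp ((n-1)*x) * ((1+w)^a * exp (- (A*w) - A*M*x/2 + ln 2 * (N*T)))"
    using e1 x0 A0 w0 by (intro mult_right_mono mult_left_mono) auto
  also have "\<dots> = 2 * ln 2 * (A * N^2 * x) * ((1+w)^a * exp (- (A*w) - A*M*x/2 + ln 2 * (N*T) + (n-1)*x))"
    by (simp add: algebra_simps flip: exp_add)
  also have "\<dots> \<le> 2 * ln 2 * (A * N^2 * x) * H"
  proof -
    have l1: "ln 2 * (N*T) \<le> 25/36 * (N*A*x)" by (rule mult_mono[OF ln2_le NT]) (use D0 DT in auto)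
    have l2: "(n-1)*x \<le> A/4 * x" using nA x0 assms by (intro mult_right_mono) (auto simp: of_nat_diff)
    have l3: "25/36 * (N*A*x) - A*M*x/2 + A/4*x \<le> 7/50*A*x"
    proof -
      have e: "25/36 * (N*A*x) - A*M*x/2 + A/4*x = (A*x)*(25/36*N - M/2 + 1/4)" by (simp add: algebra_simps)
      have N2: "(2::real) \<le> N" using assms by simp
      have "25/36*N - M/2 + 1/4 \<le> 7/50" using N2 unfolding M_def by (simp add: field_simps)
      hence "(A*x)*(25/36*N - M/2 + 1/4) \<le> (A*x)*(7/50)" using A0 x0 by (intro mult_left_mono) auto
      thus ?thesis using e by simp
    qed
    have "- (A*w) - A*M*x/2 + ln 2 * (N*T) + (n-1)*x \<le> - (A*w) + 7/50*A*x" using l1 l2 l3 by linarith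
    hence "(1+w)^a * exp (- (A*w) - A*M*x/2 + ln 2 * (N*T) + (n-1)*x) \<le> H"
      unfolding H_def using w0 by (intro mult_left_mono) auto
    thus ?thesis using A0 x0 ln2_le by (intro mult_left_mono) auto
  qed
  also have "\<dots> < 1"
  proof (cases "w \<le> 3/2")
    case True
    have "(1+w)^a \<le> exp (w - 3*w^2/(6+4*w))^a" using ln_pade[OF w0] w0 by (intro power_mono) auto
    also have "\<dots> = exp (A * (w - 3*w^2/(6+4*w)))" by (simp add: A_def exp_of_nat_mult)
    finally have "H \<le> exp (A * (w - 3*w^2/(6+4*w))) * exp (- (A*w) + 7/50*A*x)"
      unfolding H_def by (rule mult_right_mono) simp
    also have "\<dots> = exp (- (A * (3*w^2/(6+4*w) - 7/50*x)))" by (simp add: algebra_simps flip: exp_add)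
    also have "\<dots> \<le> exp (- (211/900) * (A*w^2))"
    proof -
      have "(2*w) * w^2 \<le> 3 * w^2" using True w0 by (intro mult_right_mono) auto
      hence "w^2/4 \<le> 3*w^2/(6+4*w)" using True w0 by (simp add: field_simps)
      hence "w^2 * (211/900) \<le> 3*w^2/(6+4*w) - 7/50*x" using xw2 by linarith
      hence "A * (w^2 * (211/900)) \<le> A * (3*w^2/(6+4*w) - 7/50*x)" using A0 by (rule mult_left_mono)
      thus ?thesis by (simp add: algebra_simps)
    qed
    finally have Hb: "H \<le> exp (- (211/900) * (A*w^2))" .
    have "2 * ln 2 * (A * N^2 * x) * H \<le> 2 * ln 2 * (4/9 * (A * w^2)) * exp (- (211/900) * (A*w^2))"
    proof (rule mult_mono[OF _ Hb])
      have "A * (N^2 * x) \<le> A * (4/9 * w^2)" using N2x A0 by (rule mult_left_mono)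
      hence "(2 * ln 2) * (A * (N^2 * x)) \<le> (2 * ln 2) * (A * (4/9 * w^2))" by (rule mult_left_mono) simp
      thus "2 * ln 2 * (A * N^2 * x) \<le> 2 * ln 2 * (4/9 * (A * w^2))" by (simp add: mult.assoc mult.left_commute)
    qed (use A0 x0 H0 in auto)
    also have "\<dots> < 1" by (rule route1[OF A0 w0])
    finally show ?thesis .
  next
    case False
    define r where "r = (1+w) * exp (- w + 7/50*x)"
    have r0: "0 < r" using w0 by (simp add: r_def)
    have Hr: "H = r^a"
      by (simp add: H_def r_def power_mult_distrib A_def flip: exp_of_nat_mult) (simp add: algebra_simps)
    have r4: "r \<le> exp (-1/4)"
    proof -
      have "r \<le> exp (w - 3*w^2/(6+4*w)) * exp (- w + 7/50*x)"
        unfolding r_def using ln_pade[OF w0] by (rule mult_right_mono) simp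
      also have "\<dots> = exp (- (3*w^2/(6+4*w)) + 7/50*x)" by (simp flip: exp_add)
      also have "\<dots> \<le> exp (-1/4)"
      proof -
        have "(211/75)*w^2 - (32/25)*w - 3/2 \<ge> 0"
        proof -
          have "(211/75)*w*(w - 3/2) \<ge> 0" using False w0 by simp
          moreover have "(211/75)*w*(w - 3/2) + (147/50)*w - 3/2 = (211/75)*w^2 - (32/25)*w - 3/2"
            by (simp add: power2_eq_square field_simps)
          ultimately show ?thesis using False by linarith
        qed
        hence "1/4 + 7/150*w \<le> 3*w^2/(6+4*w)" using w0 by (simp add: field_simps power2_eq_square)
        thus ?thesis using xw by simp
      qed
      finally show ?thesis .
    qed
    have "A * H \<le> 4 * r^4" unfolding Hr A_def by (rule ar_le[OF r0 r4 a4])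
    have "2 * ln 2 * (A * N^2 * x) * H = 2 * ln 2 * (N^2 * x) * (A * H)" by simp
    also have "\<dots> \<le> 2 * (25/36) * (4/9 * w^2) * (4 * r^4)"
    proof (rule mult_mono[OF _ \<open>A * H \<le> 4 * r^4\<close>])
      show "2 * ln 2 * (N^2 * x) \<le> 2 * (25/36) * (4/9 * w^2)"
        by (rule mult_mono) (use ln2_le N2x x0 in auto)
    qed (use A0 H0 in auto)
    also have "\<dots> = (800/324) * (w^2 * ((1+w)^4 * exp (4 * (- w + 7/50*x))))"
      by (simp add: r_def power_mult_distrib exp_of_nat_mult[symmetric])
    also have "\<dots> \<le> (800/324) * (w^2 * ((1+w)^4 * exp (- (286/75) * w)))"
      using xw w0 by (intro mult_left_mono) auto
    also have "\<dots> < 1" by (rule route2[OF w0])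
    finally show ?thesis .
  qed
  finally show ?thesis unfolding Q_def X_def D_def x_def a_def .
qed


lemma main_ineq: fixes n N :: nat and p :: real
  assumes "1 \<le> n" "1 \<le> N" "0 < p" "p < 1"
  shows "((1-p)^(2*N) + 2 * real N * p * (1-p)^(2*N-1))^(n*2^(n-1)) * (real N * 2^n) * (2 powr (real N * ((1+p^2)^n - 1)) - 1) < 1"
proof -
  have qe: "(1-p)^(2*N) + 2 * real N * p * (1-p)^(2*N-1) = (1-p)^(2*N-1) * (1 + (2 * real N - 1) * p)"
  proof -
    have "2*N = Suc (2*N-1)" using assms by simp
    hence "(1-p)^(2*N) = (1-p)*(1-p)^(2*N-1)" by (metis power_Suc)
    thus ?thesis by (simp add: algebra_simps)
  qed
  have x: "0 < p^2" "p^2 < 1" using assms by (auto simp: power_less_one_iff)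
  have key: "((1-p)^(2*N-1) * (1 + (2 * real N - 1) * p))^(n*2^(n-1)) * (real N * 2^n) * (2 powr (real N * ((1+p^2)^n - 1)) - 1) < 1"
  proof (cases "n = 1")
    case n1: True
    show ?thesis
    proof (cases "N = 1")
      case True
      have "(1-p)^1 * (1 + (2*1-1)*p) = 1 - p^2" by (simp add: power2_eq_square algebra_simps)
      thus ?thesis using caseA[OF assms(3,4)] n1 True by simp
    next
      case False
      show ?thesis
      proof (cases "N = 2")
        case True
        thus ?thesis using caseB[OF assms(3,4)] n1 by (simp add: mult.commute)
      next
        case False
        hence "3 \<le> N" using \<open>N \<noteq> 1\<close> assms by auto
        from caseC[OF this assms(3,4)] show ?thesis using n1 assms by (simp add: mult.commute of_nat_diff)
      qed
    qed
  next
    case False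
    hence n2: "2 \<le> n" using assms by auto
    show ?thesis
    proof (cases "N = 1")
      case N1: True
      have Q1: "(1-p)^(2*N-1) * (1 + (2 * real N - 1)*p) = 1 - p^2" using N1 by (simp add: power2_eq_square algebra_simps)
      show ?thesis
      proof (cases "n = 2")
        case True
        have "(1 + p^2)^2 - 1 = 2*p^2 + (p^2)^2" by (simp add: power2_eq_square algebra_simps)
        thus ?thesis using caseD[OF x] True N1 Q1 by simp
      next
        case False
        hence "3 \<le> n" using n2 by auto
        from caseE[OF this x] show ?thesis using N1 Q1 by simp
      qed
    next
      case False
      hence "2 \<le> N" using assms by auto
      from caseF[OF n2 this assms(3,4)] show ?thesis using assms by (simp add: of_nat_diff)
    qed
  qed
  show ?thesis unfolding qe by (rule key)
qed


lemma prob_pair_times: fixes M1 :: "'a pmf" and M2 :: "'b pmf"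
  shows "measure_pmf.prob (pair_pmf M1 M2) (A \<times> B) = measure_pmf.prob M1 A * measure_pmf.prob M2 B"
proof -
  have "measure_pmf.prob (pair_pmf M1 M2) (A \<times> B) = measure_pmf.prob (pair_pmf M1 M2) ((A \<times> B) \<inter> set_pmf (pair_pmf M1 M2))"
    by (rule measure_Int_set_pmf[symmetric])
  also have "(A \<times> B) \<inter> set_pmf (pair_pmf M1 M2) = (A \<inter> set_pmf M1) \<times> (B \<inter> set_pmf M2)" by auto
  also have "measure_pmf.prob (pair_pmf M1 M2) \<dots> = measure_pmf.prob M1 (A \<inter> set_pmf M1) * measure_pmf.prob M2 (B \<inter> set_pmf M2)"
    by (rule measure_pmf_prob_product) (auto intro: countable_subset[OF _ countable_set_pmf])
  also have "\<dots> = measure_pmf.prob M1 A * measure_pmf.prob M2 B" by (simp add: measure_Int_set_pmf)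
  finally show ?thesis .
qed

lemma prob_Pi_pmf_groups:
  fixes G :: "'g \<Rightarrow> 'i set" and P :: "'g \<Rightarrow> ('i \<Rightarrow> 'b) \<Rightarrow> bool"
  assumes "finite K" "\<forall>g\<in>K. finite (G g)" "disjoint_family_on G K"
    "\<forall>g\<in>K. \<forall>f h. (\<forall>i\<in>G g. f i = h i) \<longrightarrow> P g f = P g h"
  shows "measure_pmf.prob (Pi_pmf (\<Union>g\<in>K. G g) d pp) {f. \<forall>g\<in>K. P g f}
         = (\<Prod>g\<in>K. measure_pmf.prob (Pi_pmf (G g) d pp) {f. P g f})"
  using assms
proof (induction K rule: finite_induct)
  case empty
  show ?case by simp
next
  case (insert g K)
  let ?U = "\<Union>g\<in>K. G g"
  have finU: "finite ?U" using insert by auto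
  have finG: "finite (G g)" using insert by auto
  have disj: "G g \<inter> ?U = {}"
    using insert.prems(2) insert.hyps(2) unfolding disjoint_family_on_def by fastforce
  have IH: "measure_pmf.prob (Pi_pmf ?U d pp) {f. \<forall>g\<in>K. P g f}
         = (\<Prod>g\<in>K. measure_pmf.prob (Pi_pmf (G g) d pp) {f. P g f})"
    using insert.prems by (intro insert.IH) (auto simp: disjoint_family_on_def)
  define mix where "mix = (\<lambda>(f::'i\<Rightarrow>'b, h::'i\<Rightarrow>'b) x. if x \<in> G g then f x else h x)"
  have U: "(\<Union>g\<in>insert g K. G g) = G g \<union> ?U" by auto
  have PU: "Pi_pmf (G g \<union> ?U) d pp = map_pmf mix (pair_pmf (Pi_pmf (G g) d pp) (Pi_pmf ?U d pp))"
    unfolding mix_def by (rule Pi_pmf_union[OF finG finU disj])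
  have pre: "mix -` {f. \<forall>g'\<in>insert g K. P g' f} = {f. P g f} \<times> {h. \<forall>g'\<in>K. P g' h}"
  proof (intro set_eqI iffI; clarsimp)
    fix f h
    assume a: "P g (mix (f, h))" "\<forall>g'\<in>K. P g' (mix (f, h))"
    have "P g (mix (f,h)) = P g f"
    proof -
      have cong: "\<And>f h. (\<forall>i\<in>G g. f i = h i) \<Longrightarrow> P g f = P g h" using insert.prems(3) by blast
      show ?thesis unfolding mix_def using cong[of "\<lambda>x. if x \<in> G g then f x else h x" f] by auto
    qed
    moreover have "P g' (mix (f,h)) = P g' h" if "g' \<in> K" for g'
    proof -
      have dj: "G g' \<inter> G g = {}" using disj that by auto
      have cong: "\<And>f h. (\<forall>i\<in>G g'. f i = h i) \<Longrightarrow> P g' f = P g' h" using insert.prems(3) that by blast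
      have "\<forall>i\<in>G g'. (if i \<in> G g then f i else h i) = h i" using dj by auto
      from cong[OF this] show ?thesis unfolding mix_def by simp
    qed
    ultimately show "P g f \<and> (\<forall>g'\<in>K. P g' h)" using a by auto
  next
    fix f h
    assume a: "P g f" "\<forall>g'\<in>K. P g' h"
    have "P g (mix (f,h)) = P g f"
    proof -
      have cong: "\<And>f h. (\<forall>i\<in>G g. f i = h i) \<Longrightarrow> P g f = P g h" using insert.prems(3) by blast
      show ?thesis unfolding mix_def using cong[of "\<lambda>x. if x \<in> G g then f x else h x" f] by auto
    qed
    moreover have "P g' (mix (f,h)) = P g' h" if "g' \<in> K" for g'
    proof -
      have dj: "G g' \<inter> G g = {}" using disj that by auto
      have cong: "\<And>f h. (\<forall>i\<in>G g'. f i = h i) \<Longrightarrow> P g' f = P g' h" using insert.prems(3) that by blast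
      have "\<forall>i\<in>G g'. (if i \<in> G g then f i else h i) = h i" using dj by auto
      from cong[OF this] show ?thesis unfolding mix_def by simp
    qed
    ultimately show "P g (mix (f, h)) \<and> (\<forall>g'\<in>K. P g' (mix (f, h)))" using a by auto
  qed
  have "measure_pmf.prob (Pi_pmf (\<Union>g\<in>insert g K. G g) d pp) {f. \<forall>g'\<in>insert g K. P g' f}
      = measure_pmf.prob (pair_pmf (Pi_pmf (G g) d pp) (Pi_pmf ?U d pp)) ({f. P g f} \<times> {h. \<forall>g'\<in>K. P g' h})"
    unfolding U PU measure_map_pmf pre ..
  also have "\<dots> = measure_pmf.prob (Pi_pmf (G g) d pp) {f. P g f} * measure_pmf.prob (Pi_pmf ?U d pp) {h. \<forall>g'\<in>K. P g' h}"
    by (rule prob_pair_times)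
  also have "\<dots> = (\<Prod>g\<in>insert g K. measure_pmf.prob (Pi_pmf (G g) d pp) {f. P g f})"
    using IH insert.hyps by simp
  finally show ?case .
qed


definition Kset :: "nat \<Rightarrow> (bool list \<times> nat) set" where
  "Kset n = {(x,k). x \<in> addrs n \<and> k < n \<and> \<not> x!k}"

definition grp :: "nat \<Rightarrow> bool list \<times> nat \<Rightarrow> (bool list \<times> nat \<times> nat) set" where
  "grp N g = {fst g, (fst g)[snd g := True]} \<times> {..<N} \<times> {snd g}"

lemma upd_id_F: "\<not> x!k \<Longrightarrow> x[k := False] = x"
  by (metis (full_types) list_update_id)

lemma upd_id_T: "x!k \<Longrightarrow> x[k := True] = x"
  by (metis (full_types) list_update_id)

lemma addrs_eq: "addrs n = {xs. set xs \<subseteq> (UNIV::bool set) \<and> length xs = n}"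
  by (auto simp: addrs_def)

lemma finite_addrs: "finite (addrs n)"
  unfolding addrs_eq by (rule finite_lists_length_eq) simp

lemma card_addrs: "card (addrs n) = 2^n"
  using card_lists_length_eq[of "UNIV::bool set" n] by (simp add: addrs_def)

lemma card_addrs_k: assumes "k < n" shows "card {x \<in> addrs n. \<not> x!k} = 2^(n-1)"
proof -
  let ?A0 = "{x \<in> addrs n. \<not> x!k}" and ?A1 = "{x \<in> addrs n. x!k}"
  have b: "bij_betw (\<lambda>x. x[k := True]) ?A0 ?A1"
  proof (rule bij_betwI[where g = "\<lambda>x. x[k := False]"])
    show "(\<lambda>x. x[k := True]) \<in> ?A0 \<rightarrow> ?A1" using assms by (auto simp: addrs_def)
    show "(\<lambda>x. x[k := False]) \<in> ?A1 \<rightarrow> ?A0" using assms by (auto simp: addrs_def)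
    show "(x[k := True])[k := False] = x" if "x \<in> ?A0" for x using that by (simp add: upd_id_F)
    show "(y[k := False])[k := True] = y" if "y \<in> ?A1" for y using that by (simp add: upd_id_T)
  qed
  have "card ?A0 = card ?A1" using bij_betw_same_card[OF b] .
  moreover have "addrs n = ?A0 \<union> ?A1" by auto
  hence "card (addrs n) = card ?A0 + card ?A1"
    using finite_addrs by (metis (no_types, lifting) card_Un_disjoint disjoint_iff finite_Un mem_Collect_eq)
  ultimately have "2 * card ?A0 = 2^n" using card_addrs by simp
  moreover have "(2::nat)^n = 2 * 2^(n-1)" using assms by (cases n) auto
  ultimately show ?thesis by simp
qed

lemma Kset_sigma: "Kset n = (\<lambda>(k,x). (x,k)) ` (SIGMA k:{..<n}. {x \<in> addrs n. \<not> x!k})"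
  by (auto simp: Kset_def image_iff)

lemma card_Kset: assumes "1 \<le> n" shows "card (Kset n) = n * 2^(n-1)"
proof -
  have inj: "inj_on (\<lambda>(k,x). (x,k)) (SIGMA k:{..<n}. {x \<in> addrs n. \<not> x!k})"
    by (auto simp: inj_on_def)
  have "card (Kset n) = card (SIGMA k:{..<n}. {x \<in> addrs n. \<not> x!k})"
    unfolding Kset_sigma by (rule card_image[OF inj])
  also have "\<dots> = (\<Sum>k<n. card {x \<in> addrs n. \<not> x!k})"
    using finite_addrs by (subst card_SigmaI) auto
  also have "\<dots> = (\<Sum>k<n. 2^(n-1))" by (rule sum.cong) (auto simp: card_addrs_k)
  finally show ?thesis by simp
qed

lemma finite_Kset: "finite (Kset n)"
proof -
  have "Kset n \<subseteq> addrs n \<times> {..<n}" by (auto simp: Kset_def)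
  thus ?thesis using finite_addrs by (rule finite_subset[OF _ finite_cartesian_product]) auto
qed

lemma finite_grp: "finite (grp N g)" by (simp add: grp_def)

lemma card_grp: assumes "g \<in> Kset n" shows "card (grp N g) = 2*N"
proof -
  obtain x k where g: "g = (x,k)" and x: "length x = n" "k < n" "\<not> x!k"
    using assms by (auto simp: Kset_def addrs_def)
  have "x \<noteq> x[k := True]" using x by (metis nth_list_update_eq)
  hence "card {x, x[k := True]} = 2" by simp
  thus ?thesis by (simp add: grp_def g card_cartesian_product)
qed

lemma UN_grp: "(\<Union>g\<in>Kset n. grp N g) = addrs n \<times> {..<N} \<times> {..<n}"
proof (intro set_eqI iffI)
  fix i assume "i \<in> (\<Union>g\<in>Kset n. grp N g)"
  thus "i \<in> addrs n \<times> {..<N} \<times> {..<n}" by (auto simp: grp_def Kset_def addrs_def)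
next
  fix i assume i: "i \<in> addrs n \<times> {..<N} \<times> {..<n}"
  then obtain y j k where iy: "i = (y,j,k)" and y: "length y = n" "j < N" "k < n"
    by (auto simp: addrs_def)
  show "i \<in> (\<Union>g\<in>Kset n. grp N g)"
  proof (cases "y!k")
    case False
    hence "(y,k) \<in> Kset n" using y by (auto simp: Kset_def addrs_def)
    moreover have "i \<in> grp N (y,k)" using y by (auto simp: grp_def iy)
    ultimately show ?thesis by blast
  next
    case True
    have "(y[k:=False],k) \<in> Kset n" using y by (auto simp: Kset_def addrs_def)
    moreover have "(y[k:=False])[k:=True] = y" using True by (simp add: upd_id_T)
    hence "i \<in> grp N (y[k:=False],k)" using y by (auto simp: grp_def iy)
    ultimately show ?thesis by blast
  qed
qed

lemma disj_grp: "disjoint_family_on (grp N) (Kset n)"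
proof (unfold disjoint_family_on_def, intro ballI impI)
  fix g1 g2 assume g: "g1 \<in> Kset n" "g2 \<in> Kset n" "g1 \<noteq> g2"
  obtain x1 k1 where g1: "g1 = (x1,k1)" "k1 < length x1" "\<not> x1!k1" using g(1) by (auto simp: Kset_def addrs_def)
  obtain x2 k2 where g2: "g2 = (x2,k2)" "k2 < length x2" "\<not> x2!k2" using g(2) by (auto simp: Kset_def addrs_def)
  show "grp N g1 \<inter> grp N g2 = {}"
  proof (rule ccontr)
    assume "grp N g1 \<inter> grp N g2 \<noteq> {}"
    then obtain y j k where yi: "(y,j,k) \<in> grp N g1" "(y,j,k) \<in> grp N g2" by auto
    hence k: "k = k1" "k = k2" by (auto simp: grp_def g1 g2)
    have "y[k := False] = x1" using yi(1) g1 k by (auto simp: grp_def upd_id_F)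
    moreover have "y[k := False] = x2" using yi(2) g2 k by (auto simp: grp_def upd_id_F)
    ultimately show False using g(3) g1 g2 k by simp
  qed
qed


lemma prob_grp: assumes "g \<in> Kset n" "0 \<le> p" "p \<le> 1"
  shows "measure_pmf.prob (Pi_pmf (grp N g) False (\<lambda>_. bernoulli_pmf p)) {f. card {i\<in>grp N g. f i} \<le> 1}
         = (1-p)^(2*N) + 2*N*p*(1-p)^(2*N-1)"
proof -
  have b: "binomial_pmf (2*N) p = map_pmf (\<lambda>f. card {x\<in>grp N g. f x}) (Pi_pmf (grp N g) False (\<lambda>_. bernoulli_pmf p))"
    by (rule binomial_pmf_altdef') (use assms finite_grp card_grp in auto)
  have "measure_pmf.prob (Pi_pmf (grp N g) False (\<lambda>_. bernoulli_pmf p)) {f. card {i\<in>grp N g. f i} \<le> 1}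
      = measure_pmf.prob (map_pmf (\<lambda>f. card {x\<in>grp N g. f x}) (Pi_pmf (grp N g) False (\<lambda>_. bernoulli_pmf p))) {..1}"
    by (simp add: vimage_def)
  also have "\<dots> = measure_pmf.prob (binomial_pmf (2*N) p) {..1}" by (simp only: b)
  also have "\<dots> = sum (pmf (binomial_pmf (2*N) p)) {..1}" by (rule measure_measure_pmf_finite) simp
  also have "\<dots> = (1-p)^(2*N) + 2*N*p*(1-p)^(2*N-1)"
    using assms by (simp add: atMost_Suc)
  finally show ?thesis by simp
qed

lemma compat_grp:
  assumes "k < n" "\<not> x!k" "z \<in> {x, x[k:=True]}" "y \<in> {x, x[k:=True]}" "E (y,j,k)"
  shows "compatible n E z (y,j)"
  unfolding compatible_def read_addr_def
proof (intro allI impI)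
  fix t assume t: "t < n" and ne: "(if E (fst (y,j), snd (y,j), t) then None else Some (fst (y,j) ! t)) \<noteq> None"
  have "t \<noteq> k" using ne assms(5) by auto
  hence "y!t = x!t" "z!t = x!t" using assms(3,4) by auto
  thus "(if E (fst (y,j), snd (y,j), t) then None else Some (fst (y,j) ! t)) = Some (z ! t)"
    using ne by (auto split: if_splits)
qed

lemma cycle_grp:
  assumes x: "x \<in> addrs n" "k < n" "\<not> x!k"
    and y: "y1 \<in> {x, x[k:=True]}" "y2 \<in> {x, x[k:=True]}" "j1 < N" "j2 < N"
    and E: "E (y1,j1,k)" "E (y2,j2,k)" and ne: "(y1,j1) \<noteq> (y2,j2)"
  shows "(y1,j1) \<in> Ycycle n N E \<and> (y2,j2) \<in> Ycycle n N E"
proof -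
  define x' where "x' = x[k:=True]"
  define vs where "vs = [Inl x, Inr (y1,j1), Inl x', Inr (y2,j2)]"
  have lx: "length x = n" using x by (simp add: addrs_def)
  have x'a: "x' \<in> addrs n" using lx by (simp add: x'_def addrs_def)
  have "x' ! k" using lx x(2) by (simp add: x'_def)
  hence xx: "x \<noteq> x'" using x(3) by auto
  have ya: "y1 \<in> addrs n" "y2 \<in> addrs n" using y x(1) x'a unfolding x'_def by auto
  have r1: "(y1,j1) \<in> reads n N" using ya y by (simp add: reads_def)
  have r2: "(y2,j2) \<in> reads n N" using ya y by (simp add: reads_def)
  have c1: "compatible n E z (y1,j1)" if "z \<in> {x, x[k:=True]}" for z
    by (rule compat_grp[of k n x z y1 E j1, OF x(2,3) that y(1) E(1)])
  have c2: "compatible n E z (y2,j2)" if "z \<in> {x, x[k:=True]}" for z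
    by (rule compat_grp[of k n x z y2 E j2, OF x(2,3) that y(2) E(2)])
  have za: "z \<in> addrs n" if "z \<in> {x, x[k:=True]}" for z using that x(1) x'a unfolding x'_def by auto
  have a1: "gadj n N E (Inl z) (Inr (y1,j1))" "gadj n N E (Inr (y1,j1)) (Inl z)" if "z \<in> {x, x[k:=True]}" for z
    using c1[OF that] za[OF that] r1 by (simp_all add: gadj_def)
  have a2: "gadj n N E (Inl z) (Inr (y2,j2))" "gadj n N E (Inr (y2,j2)) (Inl z)" if "z \<in> {x, x[k:=True]}" for z
    using c2[OF that] za[OF that] r2 by (simp_all add: gadj_def)
  have zx: "x \<in> {x, x[k:=True]}" "x' \<in> {x, x[k:=True]}" by (simp_all add: x'_def)
  have cyc: "is_cycle (gadj n N E) vs"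
    unfolding is_cycle_def
  proof (intro conjI)
    show "3 \<le> length vs" by (simp add: vs_def)
    show "distinct vs" using xx ne by (simp add: vs_def)
    have l: "length vs = 4" by (simp add: vs_def)
    have g0: "gadj n N E (Inl x) (Inr (y1,j1))" using a1(1)[OF zx(1)] .
    have g1: "gadj n N E (Inr (y1,j1)) (Inl x')" using a1(2)[OF zx(2)] .
    have g2: "gadj n N E (Inl x') (Inr (y2,j2))" using a2(1)[OF zx(2)] .
    have g3: "gadj n N E (Inr (y2,j2)) (Inl x)" using a2(2)[OF zx(1)] .
    show "\<forall>i<length vs. gadj n N E (vs ! i) (vs ! ((i + 1) mod length vs))"
      unfolding l
    proof (intro allI impI)
      fix i :: nat assume "i < 4"
      hence "i = 0 \<or> i = 1 \<or> i = 2 \<or> i = 3" by arith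
      thus "gadj n N E (vs ! i) (vs ! ((i + 1) mod 4))"
        by (elim disjE) (simp_all add: vs_def g0 g1 g2 g3)
    qed
  qed
  have "Inr (y1,j1) \<in> set vs" "Inr (y2,j2) \<in> set vs" by (simp_all add: vs_def)
  thus ?thesis using cyc r1 r2 unfolding Ycycle_def by blast
qed

lemma finite_Ycycle: "finite (Ycycle n N E)"
proof -
  have "Ycycle n N E \<subseteq> reads n N" by (auto simp: Ycycle_def)
  moreover have "finite (reads n N)" using finite_addrs by (simp add: reads_def)
  ultimately show ?thesis by (rule finite_subset)
qed

lemma bad_grp:
  assumes g: "g \<in> Kset n" and c: "\<not> card {i\<in>grp N g. E i} \<le> 1"
  shows "1 < card (Ycycle n N E)"
proof -
  obtain x k where gx: "g = (x,k)" and x: "x \<in> addrs n" "k < n" "\<not> x!k" using g by (auto simp: Kset_def)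
  let ?S = "{i\<in>grp N g. E i}"
  have fS: "finite ?S" using finite_grp by simp
  have "2 \<le> card ?S" using c by simp
  hence "?S \<noteq> {}" by (metis card.empty not_numeral_le_zero)
  then obtain i1 where i1S: "i1 \<in> ?S" by blast
  have "card (?S - {i1}) = card ?S - 1" using i1S fS by (simp add: card_Diff_singleton)
  hence "card (?S - {i1}) \<noteq> 0" using \<open>2 \<le> card ?S\<close> by linarith
  hence "?S - {i1} \<noteq> {}" by (metis card.empty)
  then obtain i2 where "i2 \<in> ?S - {i1}" by blast
  hence i: "i1 \<in> ?S" "i2 \<in> ?S" "i1 \<noteq> i2" using i1S by auto
  obtain y1 j1 k1 where i1: "i1 = (y1,j1,k1)" by (cases i1) auto
  obtain y2 j2 k2 where i2: "i2 = (y2,j2,k2)" by (cases i2) auto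
  have h1: "y1 \<in> {x, x[k:=True]}" "j1 < N" "k1 = k" "E (y1,j1,k)" using i(1) i1 gx by (auto simp: grp_def)
  have h2: "y2 \<in> {x, x[k:=True]}" "j2 < N" "k2 = k" "E (y2,j2,k)" using i(2) i2 gx by (auto simp: grp_def)
  have ne: "(y1,j1) \<noteq> (y2,j2)" using i(3) i1 i2 h1(3) h2(3) by auto
  have "(y1,j1) \<in> Ycycle n N E \<and> (y2,j2) \<in> Ycycle n N E"
    by (rule cycle_grp[OF x h1(1) h2(1) h1(2) h2(2) h1(4) h2(4) ne])
  hence "{(y1,j1), (y2,j2)} \<subseteq> Ycycle n N E" by auto
  hence "card {(y1,j1), (y2,j2)} \<le> card (Ycycle n N E)" by (rule card_mono[OF finite_Ycycle])
  thus ?thesis using ne by simp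
qed

theorem lemma1:
  fixes n N :: nat and p :: real
  assumes "1 \<le> n" and "1 \<le> N" and "0 < p" and "p < 1"
  shows "measure_pmf.prob (erasure_pmf n N p) {E. card (Ycycle n N E) > 1}
           > 1 - U_cycle n N p / (real N * 2 ^ n * (1 - U_cycle n N p))"
proof -
  define q where "q = (1-p)^(2*N) + 2 * real N * p * (1-p)^(2*N-1)"
  define a where "a = n*2^(n-1)"
  define D where "D = (1+p^2)^n - 1"
  define U where "U = U_cycle n N p"
  let ?PM = "erasure_pmf n N p"
  let ?Good = "{E. \<forall>g\<in>Kset n. card {i\<in>grp N g. E i} \<le> 1}"
  have pm: "?PM = Pi_pmf (\<Union>g\<in>Kset n. grp N g) False (\<lambda>_. bernoulli_pmf p)"
    by (simp add: erasure_pmf_def UN_grp)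
  have good: "measure_pmf.prob ?PM ?Good = q^a"
  proof -
    have "measure_pmf.prob ?PM ?Good
        = (\<Prod>g\<in>Kset n. measure_pmf.prob (Pi_pmf (grp N g) False (\<lambda>_. bernoulli_pmf p)) {f. card {i\<in>grp N g. f i} \<le> 1})"
      unfolding pm
    proof (rule prob_Pi_pmf_groups[where P = "\<lambda>g f. card {i\<in>grp N g. f i} \<le> 1"])
      show "finite (Kset n)" by (rule finite_Kset)
      show "\<forall>g\<in>Kset n. finite (grp N g)" by (simp add: finite_grp)
      show "disjoint_family_on (grp N) (Kset n)" by (rule disj_grp)
      show "\<forall>g\<in>Kset n. \<forall>f h. (\<forall>i\<in>grp N g. f i = h i) \<longrightarrow>
              (card {i\<in>grp N g. f i} \<le> 1) = (card {i\<in>grp N g. h i} \<le> 1)"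
      proof (intro ballI allI impI)
        fix g and f h :: "bool list \<times> nat \<times> nat \<Rightarrow> bool" assume "\<forall>i\<in>grp N g. f i = h i"
        hence "{i\<in>grp N g. f i} = {i\<in>grp N g. h i}" by auto
        thus "(card {i\<in>grp N g. f i} \<le> 1) = (card {i\<in>grp N g. h i} \<le> 1)" by simp
      qed
    qed
    also have "\<dots> = (\<Prod>g\<in>Kset n. q)"
    proof (rule prod.cong[OF refl])
      fix g assume g: "g \<in> Kset n"
      show "measure_pmf.prob (Pi_pmf (grp N g) False (\<lambda>_. bernoulli_pmf p)) {f. card {i\<in>grp N g. f i} \<le> 1} = q"
        unfolding q_def using prob_grp[OF g, of p N] assms by simp
    qed
    also have "\<dots> = q^a" using card_Kset[OF assms(1)] by (simp add: a_def)
    finally show ?thesis .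
  qed
  have sub: "{E. \<not> 1 < card (Ycycle n N E)} \<subseteq> ?Good"
    using bad_grp by blast
  have compl: "measure_pmf.prob ?PM {E. 1 < card (Ycycle n N E)} = 1 - measure_pmf.prob ?PM {E. \<not> 1 < card (Ycycle n N E)}"
  proof -
    have "{E. 1 < card (Ycycle n N E)} = space (measure_pmf ?PM) - {E. \<not> 1 < card (Ycycle n N E)}" by auto
    moreover have "measure_pmf.prob ?PM (space (measure_pmf ?PM) - {E. \<not> 1 < card (Ycycle n N E)})
        = 1 - measure_pmf.prob ?PM {E. \<not> 1 < card (Ycycle n N E)}"
      by (rule measure_pmf.prob_compl) simp
    ultimately show ?thesis by simp
  qed
  have le: "measure_pmf.prob ?PM {E. \<not> 1 < card (Ycycle n N E)} \<le> q^a"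
  proof -
    have "measure_pmf.prob ?PM {E. \<not> 1 < card (Ycycle n N E)} \<le> measure_pmf.prob ?PM ?Good"
      by (rule measure_pmf.finite_measure_mono[OF sub]) simp
    thus ?thesis using good by simp
  qed
  have mi: "q^a * (real N * 2^n) * (2 powr (real N * D) - 1) < 1"
    using main_ineq[OF assms] unfolding q_def a_def D_def .
  have D0: "0 < D"
  proof -
    have "1 < (1+p^2)^n" using assms by (intro one_less_power) auto
    thus ?thesis by (simp add: D_def)
  qed
  have ND: "0 < real N * D" using D0 assms by simp
  have U0: "0 < U" by (simp add: U_def U_cycle_def)
  have U1: "U < 1" using ND by (simp add: U_def U_cycle_def D_def powr_less_one)
  have UU: "2 powr (real N * D) = 1/U" by (simp add: U_def U_cycle_def D_def powr_minus divide_inverse)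
  have q0: "0 \<le> q^a" using assms by (simp add: q_def)
  define c where "c = q^a * (real N * 2^n)"
  have "c * (1/U - 1) < 1" using mi UU unfolding c_def by simp
  hence "c * (1/U - 1) * U < 1 * U" using U0 by (rule mult_strict_right_mono)
  moreover have "c * (1/U - 1) * U = c * (1 - U)" using U0 by (simp add: field_simps)
  ultimately have cU: "c * (1 - U) < U" by simp
  have pos: "0 < real N * 2^n * (1-U)" using U1 assms by simp
  have "q^a * (real N * 2^n * (1-U)) < U" using cU unfolding c_def by (simp add: mult.assoc)
  hence "q^a < U / (real N * 2^n * (1-U))" using pos by (simp add: pos_less_divide_eq)
  hence "1 - U / (real N * 2^n * (1-U)) < 1 - q^a" by simp
  also have "\<dots> \<le> measure_pmf.prob ?PM {E. 1 < card (Ycycle n N E)}" using compl le by simp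
  finally show ?thesis by (simp add: U_def)
qed

end
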